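(* Let $d\ge3$, $\alpha>2$, $p\in(1,\frac{10}{9})$ and $q=p/(p-1)$. Suppose $g(x,y)\le\varepsilon(|x-y|^{-\alpha}\wedge1)$ for all $x,y$, where $\varepsilon>0$ is small enough that $\sup_{x,y}\Pi_{(x,y)}\big(e^{q\int_0^\infty g(B_s,\widetilde B_s)ds}\big)\le2$. Let $\phi\in C_c^+(\mathbb{R}^d)$ be supported in $\{|x|\le K\}$ with $K>2$. Then there is a constant $C$ (depending on $d,\alpha,g,\phi,p$, not on $t,x,y$) such that for all $t\ge0$ and $x,y\in\mathbb{R}^d$, $$V_t^{\phi,\phi}(x,y)\le C\,\widetilde Q(t,x)\,\widetilde Q(t,y).$$
   Context: Under $\Pi_{(x,y)}$, $B,\widetilde B$ are independent $d$-dimensional Brownian motions started at $x,y$. $p_t(x,y)=(2\pi t)^{-d/2}e^{-|y-x|^2/(2t)}$, $Q_tf(x)=\int_0^t\int p_s(x,y)f(y)dyds$, $$V_t^{\phi,\phi}(x,y)=\Pi_{(x,y)}\Big\{\int_0^t\big[\phi(B_s)Q_{t-s}\phi(\widetilde B_s)+\phi(\widetilde B_s)Q_{t-s}\phi(B_s)\big]e^{\int_0^sg(B_u,\widetilde B_u)du}ds\Big\},$$ and $\widetilde Q(t,x)=\int_0^t\Big[\int_{|z|\le K}p_s(x,z)dz\Big]^{1/p}ds$. *)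

theory Defs
  imports "HOL-Probability.Probability"
begin

definition heat_kernel :: "real \<Rightarrow> real^'d \<Rightarrow> real^'d \<Rightarrow> real" where
  "heat_kernel t x y =
     (2 * pi * t) powr (- real CARD('d) / 2) * exp (- (norm (y - x))\<^sup>2 / (2 * t))"

definition Qop :: "real \<Rightarrow> (real^'d \<Rightarrow> real) \<Rightarrow> real^'d \<Rightarrow> real" where
  "Qop t f x = (LINT s:{0..t}|lborel. (LINT y|lborel. heat_kernel s x y * f y))"

definition Qtilde :: "real \<Rightarrow> real \<Rightarrow> real \<Rightarrow> real^'d \<Rightarrow> real" where
  "Qtilde K p t x =
     (LINT s:{0..t}|lborel. (LINT z:{z. norm z \<le> K}|lborel. heat_kernel s x z) powr (1 / p))"

text \<open>\<open>W\<close>, \<open>W'\<close> are independent standard \<open>d\<close>-dimensional Brownian motions (started at 0)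
  on the probability space \<open>M\<close>: continuous paths, \<open>W 0 = 0\<close>, and for any times
  \<open>0 \<le> t_0 < t_1 < ... < t_n\<close> the increments of both processes are jointly independent,
  each increment \<open>W t_{i+1} - W t_i\<close> having the Gaussian density \<open>p_{t_{i+1}-t_i}(0,.)\<close>.\<close>
definition indep_std_BM_pair ::
  "'a measure \<Rightarrow> (real \<Rightarrow> 'a \<Rightarrow> real^'d) \<Rightarrow> (real \<Rightarrow> 'a \<Rightarrow> real^'d) \<Rightarrow> bool" where
  "indep_std_BM_pair M W W' \<longleftrightarrow>
     prob_space M \<and>
     (\<forall>t. W t \<in> borel_measurable M \<and> W' t \<in> borel_measurable M) \<and>
     (\<forall>\<omega>\<in>space M. W 0 \<omega> = 0 \<and> W' 0 \<omega> = 0) \<and>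
     (\<forall>\<omega>\<in>space M. continuous_on {0..} (\<lambda>s. W s \<omega>) \<and> continuous_on {0..} (\<lambda>s. W' s \<omega>)) \<and>
     (\<forall>(ts :: nat \<Rightarrow> real) n. 0 \<le> ts 0 \<and> (\<forall>i<n. ts i < ts (Suc i)) \<longrightarrow>
        prob_space.indep_vars M (\<lambda>_. borel)
          (\<lambda>(i, b) \<omega>. if b then W (ts (Suc i)) \<omega> - W (ts i) \<omega>
                           else W' (ts (Suc i)) \<omega> - W' (ts i) \<omega>)
          ({..<n} \<times> (UNIV :: bool set)) \<and>
        (\<forall>i<n. distributed M lborel (\<lambda>\<omega>. W (ts (Suc i)) \<omega> - W (ts i) \<omega>)
                  (\<lambda>z. ennreal (heat_kernel (ts (Suc i) - ts i) 0 z)) \<and>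
               distributed M lborel (\<lambda>\<omega>. W' (ts (Suc i)) \<omega> - W' (ts i) \<omega>)
                  (\<lambda>z. ennreal (heat_kernel (ts (Suc i) - ts i) 0 z))))"

definition exp_enn :: "ennreal \<Rightarrow> ennreal" where
  "exp_enn x = (if x = \<top> then \<top> else ennreal (exp (enn2real x)))"

text \<open>Under \<open>Pi_(x,y)\<close>: \<open>B = x + W\<close>, \<open>Btilde = y + W'\<close>.
  \<open>V_t^{phi,phi}(x,y)\<close> (expectation of a nonnegative quantity, as an extended nonnegative real).\<close>
definition Vphi ::
  "'a measure \<Rightarrow> (real \<Rightarrow> 'a \<Rightarrow> real^'d) \<Rightarrow> (real \<Rightarrow> 'a \<Rightarrow> real^'d) \<Rightarrow>
   (real^'d \<Rightarrow> real^'d \<Rightarrow> real) \<Rightarrow> (real^'d \<Rightarrow> real) \<Rightarrow> real \<Rightarrow> real^'d \<Rightarrow> real^'d \<Rightarrow> ennreal" where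
  "Vphi M W W' g \<phi> t x y =
     (\<integral>\<^sup>+ \<omega>. ennreal
        (LINT s:{0..t}|lborel.
           (\<phi> (x + W s \<omega>) * Qop (t - s) \<phi> (y + W' s \<omega>)
            + \<phi> (y + W' s \<omega>) * Qop (t - s) \<phi> (x + W s \<omega>))
           * exp (LINT u:{0..s}|lborel. g (x + W u \<omega>) (y + W' u \<omega>))) \<partial>M)"

end

theory Submission
  imports Defs
begin



lemma hk_meas[measurable (raw)]:
  assumes [measurable]: "f \<in> borel_measurable M" "g \<in> borel_measurable M" "h \<in> borel_measurable M"
  shows "(\<lambda>x. heat_kernel (f x) (g x :: real^'d) (h x)) \<in> borel_measurable M"
  unfolding heat_kernel_def by measurable

lemma hk_nonneg: "0 \<le> heat_kernel s a b"
  unfolding heat_kernel_def by simp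

lemma hk_zero: "heat_kernel 0 a b = 0"
  unfolding heat_kernel_def by simp

lemma hk_shift: "heat_kernel s a b = heat_kernel s 0 (b - a)"
  unfolding heat_kernel_def by simp

lemma ennreal_integral_le: "ennreal (integral\<^sup>L N f) \<le> (\<integral>\<^sup>+ x. ennreal (f x) \<partial>N)"
proof (cases "integrable N f")
  case True
  have i2: "integrable N (\<lambda>x. max 0 (f x))" using True by auto
  have "integral\<^sup>L N f \<le> integral\<^sup>L N (\<lambda>x. max 0 (f x))"
    using True i2 by (intro integral_mono) auto
  hence "ennreal (integral\<^sup>L N f) \<le> ennreal (integral\<^sup>L N (\<lambda>x. max 0 (f x)))" by (rule ennreal_leI)
  also have "\<dots> = (\<integral>\<^sup>+ x. ennreal (max 0 (f x)) \<partial>N)"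
    using i2 by (subst nn_integral_eq_integral) auto
  also have "\<dots> = (\<integral>\<^sup>+ x. ennreal (f x) \<partial>N)"
    by (intro nn_integral_cong) (auto simp: max_def ennreal_neg)
  finally show ?thesis .
next
  case False thus ?thesis by (simp add: not_integrable_integral_eq)
qed

lemma ennreal_set_integral_le: "ennreal (set_lebesgue_integral N S f) \<le> (\<integral>\<^sup>+ x. indicator S x * ennreal (f x) \<partial>N)"
proof -
  have "ennreal (set_lebesgue_integral N S f) \<le> (\<integral>\<^sup>+ x. ennreal (indicator S x *\<^sub>R f x) \<partial>N)"
    unfolding set_lebesgue_integral_def by (rule ennreal_integral_le)
  also have "\<dots> = (\<integral>\<^sup>+ x. indicator S x * ennreal (f x) \<partial>N)"
    by (intro nn_integral_cong) (auto simp: indicator_def)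
  finally show ?thesis .
qed

lemma lborel_translate:
  fixes c :: "'a::euclidean_space"
  assumes [measurable]: "F \<in> borel_measurable borel"
  shows "(\<integral>\<^sup>+ w. F w \<partial>lborel) = (\<integral>\<^sup>+ a. F (c + a) \<partial>lborel)"
proof -
  have "(\<integral>\<^sup>+ w. F w \<partial>lborel) = (\<integral>\<^sup>+ w. F w \<partial>distr lborel borel ((+) c))"
    by (simp add: lborel_distr_plus)
  also have "\<dots> = (\<integral>\<^sup>+ a. F (c + a) \<partial>lborel)"
    by (subst nn_integral_distr) auto
  finally show ?thesis .
qed




lemma floor_approx_lim:
  fixes m :: real assumes m: "0 \<le> m"
  shows "(\<lambda>n. real (nat \<lfloor>real (Suc n) * m\<rfloor>) / real (Suc n)) \<longlonglongrightarrow> m"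
proof (rule tendsto_sandwich[where f="\<lambda>n. m - 1 / real (Suc n)" and h="\<lambda>n. m"])
  have "(\<lambda>n. 1 / real (Suc n)) \<longlonglongrightarrow> 0" by (rule LIMSEQ_Suc[OF lim_const_over_n])
  thus "(\<lambda>n. m - 1 / real (Suc n)) \<longlonglongrightarrow> m" using tendsto_diff[OF tendsto_const, of _ 0 sequentially m] by simp
  show "(\<lambda>n. m) \<longlonglongrightarrow> m" by simp
  show "\<forall>\<^sub>F n in sequentially. m - 1 / real (Suc n) \<le> real (nat \<lfloor>real (Suc n) * m\<rfloor>) / real (Suc n)"
  proof (intro always_eventually allI)
    fix n
    have "0 \<le> \<lfloor>real (Suc n) * m\<rfloor>" using m by simp
    hence e: "real (nat \<lfloor>real (Suc n) * m\<rfloor>) = real_of_int \<lfloor>real (Suc n) * m\<rfloor>" by simp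
    have "real (Suc n) * m - 1 \<le> real_of_int \<lfloor>real (Suc n) * m\<rfloor>" by linarith
    hence "(real (Suc n) * m - 1) / real (Suc n) \<le> real_of_int \<lfloor>real (Suc n) * m\<rfloor> / real (Suc n)"
      by (intro divide_right_mono) auto
    moreover have "(real (Suc n) * m - 1) / real (Suc n) = m - 1 / real (Suc n)"
      by (simp add: field_simps)
    ultimately show "m - 1 / real (Suc n) \<le> real (nat \<lfloor>real (Suc n) * m\<rfloor>) / real (Suc n)"
      unfolding e by simp
  qed
  show "\<forall>\<^sub>F n in sequentially. real (nat \<lfloor>real (Suc n) * m\<rfloor>) / real (Suc n) \<le> m"
  proof (intro always_eventually allI)
    fix n
    have "0 \<le> \<lfloor>real (Suc n) * m\<rfloor>" using m by simp
    hence e: "real (nat \<lfloor>real (Suc n) * m\<rfloor>) = real_of_int \<lfloor>real (Suc n) * m\<rfloor>" by simp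
    have "real_of_int \<lfloor>real (Suc n) * m\<rfloor> \<le> real (Suc n) * m" by linarith
    hence "real_of_int \<lfloor>real (Suc n) * m\<rfloor> / real (Suc n) \<le> real (Suc n) * m / real (Suc n)"
      by (intro divide_right_mono) auto
    thus "real (nat \<lfloor>real (Suc n) * m\<rfloor>) / real (Suc n) \<le> m"
      unfolding e by simp
  qed
qed

lemma path_meas:
  fixes W :: "real \<Rightarrow> 'a \<Rightarrow> 'b::{metric_space, second_countable_topology}"
  assumes meas: "\<And>t. W t \<in> borel_measurable M"
    and cont: "\<And>\<omega>. \<omega> \<in> space M \<Longrightarrow> continuous_on {0..} (\<lambda>s. W s \<omega>)"
  shows "(\<lambda>p. W (max 0 (fst p)) (snd p)) \<in> borel_measurable ((lborel::real measure) \<Otimes>\<^sub>M M)"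
proof (rule borel_measurable_LIMSEQ_metric)
  fix n :: nat
  let ?g = "\<lambda>p::real \<times> 'a. nat \<lfloor>real (Suc n) * max 0 (fst p)\<rfloor>"
  show "(\<lambda>p. W (real (?g p) / real (Suc n)) (snd p)) \<in> borel_measurable ((lborel::real measure) \<Otimes>\<^sub>M M)"
  proof (rule measurable_compose_countable'[where f="\<lambda>i p. W (real i / real (Suc n)) (snd p)" and I=UNIV])
    fix i :: nat show "(\<lambda>p. W (real i / real (Suc n)) (snd p)) \<in> borel_measurable ((lborel::real measure) \<Otimes>\<^sub>M M)"
      using meas by measurable
    show "?g \<in> measurable ((lborel::real measure) \<Otimes>\<^sub>M M) (count_space UNIV)"
      by measurable
  qed auto
next
  fix p assume "p \<in> space ((lborel::real measure) \<Otimes>\<^sub>M M)"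
  hence w: "snd p \<in> space M" by (auto simp: space_pair_measure)
  show "(\<lambda>n. W (real (nat \<lfloor>real (Suc n) * max 0 (fst p)\<rfloor>) / real (Suc n)) (snd p)) \<longlonglongrightarrow> W (max 0 (fst p)) (snd p)"
    using continuous_on_tendsto_compose[OF cont[OF w] floor_approx_lim[of "max 0 (fst p)"]]
    by (simp add: o_def)
qed




lemma (in prob_space) indep_vars_two:
  assumes ind: "indep_vars M' X I" and ab: "a \<in> I" "b \<in> I" "a \<noteq> b"
  shows "indep_var (M' a) (X a) (M' b) (X b)"
proof -
  have "indep_var (PiM {a} M') (\<lambda>\<omega>. restrict (\<lambda>i. X i \<omega>) {a}) (PiM {b} M') (\<lambda>\<omega>. restrict (\<lambda>i. X i \<omega>) {b})"
    using ab by (intro indep_var_restrict[OF ind]) auto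
  hence "indep_var (M' a) ((\<lambda>f. f a) \<circ> (\<lambda>\<omega>. restrict (\<lambda>i. X i \<omega>) {a})) (M' b) ((\<lambda>f. f b) \<circ> (\<lambda>\<omega>. restrict (\<lambda>i. X i \<omega>) {b}))"
    by (rule indep_var_compose) (auto intro: measurable_component_singleton)
  moreover have "((\<lambda>f. f a) \<circ> (\<lambda>\<omega>. restrict (\<lambda>i. X i \<omega>) {a})) = X a"
    "((\<lambda>f. f b) \<circ> (\<lambda>\<omega>. restrict (\<lambda>i. X i \<omega>) {b})) = X b" by (auto simp: fun_eq_iff)
  ultimately show ?thesis by simp
qed

locale bmpair =
  fixes M :: "'a measure" and W W' :: "real \<Rightarrow> 'a \<Rightarrow> real^'d"
  assumes BM: "indep_std_BM_pair M W W'"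
begin

lemma prob: "prob_space M" using BM by (simp add: indep_std_BM_pair_def)

lemma measW[measurable]: "W t \<in> borel_measurable M" "W' t \<in> borel_measurable M"
  using BM by (auto simp: indep_std_BM_pair_def)

lemma W0: "\<omega> \<in> space M \<Longrightarrow> W 0 \<omega> = 0" "\<omega> \<in> space M \<Longrightarrow> W' 0 \<omega> = 0"
  using BM by (auto simp: indep_std_BM_pair_def)

lemma contW: "\<omega> \<in> space M \<Longrightarrow> continuous_on {0..} (\<lambda>s. W s \<omega>)" "\<omega> \<in> space M \<Longrightarrow> continuous_on {0..} (\<lambda>s. W' s \<omega>)"
  using BM by (auto simp: indep_std_BM_pair_def)

lemma BMts:
  assumes "0 \<le> ts 0" "\<forall>i<n. ts i < ts (Suc i)"
  shows "prob_space.indep_vars M (\<lambda>_. borel)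
          (\<lambda>(i, b) \<omega>. if b then W (ts (Suc i)) \<omega> - W (ts i) \<omega>
                           else W' (ts (Suc i)) \<omega> - W' (ts i) \<omega>)
          ({..<n} \<times> (UNIV :: bool set))"
    "\<And>i. i<n \<Longrightarrow> distributed M lborel (\<lambda>\<omega>. W (ts (Suc i)) \<omega> - W (ts i) \<omega>)
                  (\<lambda>z. ennreal (heat_kernel (ts (Suc i) - ts i) 0 z))"
    "\<And>i. i<n \<Longrightarrow> distributed M lborel (\<lambda>\<omega>. W' (ts (Suc i)) \<omega> - W' (ts i) \<omega>)
                  (\<lambda>z. ennreal (heat_kernel (ts (Suc i) - ts i) 0 z))"
  using BM assms unfolding indep_std_BM_pair_def by blast+

lemma sfl: "sigma_finite_measure (lborel :: (real^'d) measure)"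
  by (rule lborel.sigma_finite_measure_axioms)

lemma distW:
  assumes s: "0 < s"
  shows "distributed M lborel (\<lambda>\<omega>. W s \<omega> - W 0 \<omega>) (\<lambda>z. ennreal (heat_kernel s 0 z))"
    "distributed M lborel (\<lambda>\<omega>. W' s \<omega> - W' 0 \<omega>) (\<lambda>z. ennreal (heat_kernel s 0 z))"
  using BMts(2,3)[of "\<lambda>i. if i = 0 then 0 else s" 1 0] s by auto

lemma jointWW':
  assumes s: "0 < s"
  shows "distributed M (lborel \<Otimes>\<^sub>M lborel) (\<lambda>\<omega>. (W s \<omega> - W 0 \<omega>, W' s \<omega> - W' 0 \<omega>))
           (\<lambda>(a, b). ennreal (heat_kernel s 0 a) * ennreal (heat_kernel s 0 b))"
proof -
  interpret prob_space M by (rule prob)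
  let ?ts = "\<lambda>i::nat. if i = 0 then 0 else s"
  have iv: "indep_vars (\<lambda>_. borel)
          (\<lambda>(i, b) \<omega>. if b then W (?ts (Suc i)) \<omega> - W (?ts i) \<omega>
                           else W' (?ts (Suc i)) \<omega> - W' (?ts i) \<omega>)
          ({..<1} \<times> (UNIV :: bool set))"
    using BMts(1)[of ?ts 1] s by auto
  have that_indep: "indep_var borel (\<lambda>\<omega>. W s \<omega> - W 0 \<omega>) borel (\<lambda>\<omega>. W' s \<omega> - W' 0 \<omega>)"
    using indep_vars_two[OF iv, of "(0,True)" "(0,False)"] by simp
  have "indep_var lborel (\<lambda>\<omega>. W s \<omega> - W 0 \<omega>) lborel (\<lambda>\<omega>. W' s \<omega> - W' 0 \<omega>)"
    using that_indep by (simp add: indep_var_eq)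
  thus ?thesis
    by (intro distributed_joint_indep sfl distW s)
qed

lemma jointCK:
  fixes b :: bool
  assumes s: "0 < s" and r: "0 < r"
  defines "V \<equiv> (if b then W else W')"
  shows "distributed M (lborel \<Otimes>\<^sub>M lborel) (\<lambda>\<omega>. (V s \<omega> - V 0 \<omega>, V (s + r) \<omega> - V s \<omega>))
           (\<lambda>(a, c). ennreal (heat_kernel s 0 a) * ennreal (heat_kernel r 0 c))"
proof -
  interpret prob_space M by (rule prob)
  let ?ts = "\<lambda>i::nat. if i = 0 then 0 else if i = 1 then s else s + r"
  have iv: "indep_vars (\<lambda>_. borel)
          (\<lambda>(i, b) \<omega>. if b then W (?ts (Suc i)) \<omega> - W (?ts i) \<omega>
                           else W' (?ts (Suc i)) \<omega> - W' (?ts i) \<omega>)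
          ({..<2} \<times> (UNIV :: bool set))"
    using BMts(1)[of ?ts 2] s r by (auto simp: less_2_cases_iff)
  have that_indep: "indep_var borel (\<lambda>\<omega>. V s \<omega> - V 0 \<omega>) borel (\<lambda>\<omega>. V (s + r) \<omega> - V s \<omega>)"
    using indep_vars_two[OF iv, of "(0,b)" "(1,b)"] by (cases b) (simp_all add: V_def)
  have "indep_var lborel (\<lambda>\<omega>. V s \<omega> - V 0 \<omega>) lborel (\<lambda>\<omega>. V (s + r) \<omega> - V s \<omega>)"
    using that_indep by (simp add: indep_var_eq)
  moreover have "distributed M lborel (\<lambda>\<omega>. V s \<omega> - V 0 \<omega>) (\<lambda>z. ennreal (heat_kernel s 0 z))"
    using distW[OF s] by (cases b) (simp_all add: V_def)
  moreover have "distributed M lborel (\<lambda>\<omega>. V (s + r) \<omega> - V s \<omega>) (\<lambda>z. ennreal (heat_kernel r 0 z))"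
    using BMts(2,3)[of ?ts 2 1] s r by (cases b) (simp_all add: V_def)
  ultimately show ?thesis
    by (intro distributed_joint_indep sfl)
qed

end



lemma exp_enn_meas[measurable]: "exp_enn \<in> borel_measurable borel"
  unfolding exp_enn_def[abs_def] by measurable

lemma young_pt:
  fixes p q A x l :: real
  assumes p: "1 < p" and q: "q = p / (p - 1)" and A: "0 \<le> A" and l: "0 < l"
  shows "A * exp x \<le> l powr p * A powr p / p + exp (q * x) / (q * l powr q)"
proof -
  have q1: "1 < q" using p unfolding q by (simp add: less_divide_eq)
  have iq: "1/q = (p-1)/p" unfolding q by simp
  have pq: "1/p + 1/q = 1" unfolding iq using p by (simp add: add_divide_distrib[symmetric])
  have "A * exp x = (l * A) * (exp x / l)" using l by simp
  also have "\<dots> \<le> (l * A) powr p / p + (exp x / l) powr q / q"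
    using Youngs_inequality[OF p q1 pq, of "l * A" "exp x / l"] l A by simp
  also have "(l * A) powr p = l powr p * A powr p" using l A by (simp add: powr_mult)
  also have "(exp x / l) powr q = exp (q * x) / l powr q"
    using l by (simp add: powr_def ln_div exp_diff algebra_simps)
  finally show ?thesis by (simp add: field_simps)
qed

lemma young_pt_enn:
  fixes p q A l :: real and X :: ennreal
  assumes p: "1 < p" and q: "q = p / (p - 1)" and A: "0 \<le> A" and l: "0 < l"
  shows "ennreal A * exp_enn X \<le> ennreal (l powr p * A powr p / p) + ennreal (1 / (q * l powr q)) * exp_enn (ennreal q * X)"
proof -
  have q0: "0 < q" using p unfolding q by simp
  show ?thesis
  proof (cases "X = \<top>")
    case True
    show ?thesis
    proof (cases "A = 0")
      case False
      have "ennreal q * X = \<top>" using True q0 by (simp add: ennreal_mult_top)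
      hence "exp_enn (ennreal q * X) = \<top>" by (simp add: exp_enn_def)
      moreover have "ennreal (1 / (q * l powr q)) \<noteq> 0" using q0 l by simp
      ultimately have "ennreal (1 / (q * l powr q)) * exp_enn (ennreal q * X) = \<top>"
        using ennreal_mult_eq_top_iff by auto
      thus ?thesis by simp
    qed simp
  next
    case False
    obtain x where x: "X = ennreal x" "0 \<le> x" using False by (cases X) auto
    have e1: "exp_enn X = ennreal (exp x)" using x by (simp add: exp_enn_def)
    have qx: "ennreal q * X = ennreal (q * x)" using x q0 by (simp add: ennreal_mult)
    have e2: "exp_enn (ennreal q * X) = ennreal (exp (q * x))"
      unfolding qx using q0 x by (simp add: exp_enn_def)
    have "ennreal A * exp_enn X = ennreal (A * exp x)" using A by (simp add: e1 ennreal_mult)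
    also have "\<dots> \<le> ennreal (l powr p * A powr p / p + exp (q * x) / (q * l powr q))"
      by (intro ennreal_leI young_pt[OF p q A l])
    also have "\<dots> = ennreal (l powr p * A powr p / p) + ennreal (exp (q * x) / (q * l powr q))"
      using p q0 l by (intro ennreal_plus) auto
    also have "ennreal (exp (q * x) / (q * l powr q)) = ennreal (1 / (q * l powr q)) * ennreal (exp (q * x))"
      using q0 l by (subst ennreal_mult[symmetric]) auto
    finally show ?thesis unfolding e2 .
  qed
qed

lemma young_E:
  fixes A :: "'a \<Rightarrow> real" and X :: "'a \<Rightarrow> ennreal" and p q a :: real
  assumes p: "1 < p" and q: "q = p / (p - 1)"
    and A[measurable]: "A \<in> borel_measurable M" and A0: "\<And>\<omega>. 0 \<le> A \<omega>"
    and X[measurable]: "X \<in> borel_measurable M"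
    and hX: "(\<integral>\<^sup>+\<omega>. exp_enn (ennreal q * X \<omega>) \<partial>M) \<le> 2"
    and hA: "(\<integral>\<^sup>+\<omega>. ennreal (A \<omega> powr p) \<partial>M) \<le> ennreal a" and a0: "0 \<le> a"
  shows "(\<integral>\<^sup>+\<omega>. ennreal (A \<omega>) * exp_enn (X \<omega>) \<partial>M) \<le> ennreal (2 * a powr (1/p))"
proof -
  have q0: "0 < q" using p unfolding q by simp
  have q1: "1 < q" using p unfolding q by (simp add: less_divide_eq)
  have iq: "1/q = (p-1)/p" unfolding q by simp
  have pq: "1/p + 1/q = 1" unfolding iq using p by (simp add: add_divide_distrib[symmetric])
  let ?E = "(\<integral>\<^sup>+\<omega>. ennreal (A \<omega>) * exp_enn (X \<omega>) \<partial>M)"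
  have main: "?E \<le> ennreal (2 * a' powr (1/p))" if a': "0 < a'" "a \<le> a'" for a'
  proof -
    define l where "l = a' powr (- 1 / (p * q))"
    have l0: "0 < l" using a' by (simp add: l_def)
    have lp: "l powr p = a' powr (- 1 / q)" using p q0 unfolding l_def by (simp add: powr_powr)
    have lq: "l powr q = a' powr (- 1 / p)" using p q0 unfolding l_def by (simp add: powr_powr)
    define c where "c = 1 / (q * l powr q)"
    have c0: "0 \<le> c" using q0 l0 by (simp add: c_def)
    have "?E \<le> (\<integral>\<^sup>+\<omega>. ennreal (l powr p / p) * ennreal (A \<omega> powr p) + ennreal c * exp_enn (ennreal q * X \<omega>) \<partial>M)"
    proof (intro nn_integral_mono)
      fix \<omega>
      have "ennreal (A \<omega>) * exp_enn (X \<omega>) \<le> ennreal (l powr p * A \<omega> powr p / p) + ennreal c * exp_enn (ennreal q * X \<omega>)"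
        unfolding c_def by (rule young_pt_enn[OF p q A0 l0])
      also have "ennreal (l powr p * A \<omega> powr p / p) = ennreal (l powr p / p) * ennreal (A \<omega> powr p)"
        using p by (subst ennreal_mult[symmetric]) auto
      finally show "ennreal (A \<omega>) * exp_enn (X \<omega>) \<le> ennreal (l powr p / p) * ennreal (A \<omega> powr p) + ennreal c * exp_enn (ennreal q * X \<omega>)" .
    qed
    also have "\<dots> = ennreal (l powr p / p) * (\<integral>\<^sup>+\<omega>. ennreal (A \<omega> powr p) \<partial>M) + ennreal c * (\<integral>\<^sup>+\<omega>. exp_enn (ennreal q * X \<omega>) \<partial>M)"
      by (simp add: nn_integral_add nn_integral_cmult)
    also have "\<dots> \<le> ennreal (l powr p / p) * ennreal a' + ennreal c * 2"
      using hA a' by (intro add_mono mult_left_mono hX order.trans[OF hA]) auto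
    also have "\<dots> = ennreal (l powr p / p * a' + c * 2)"
    proof -
      have lpp: "0 \<le> l powr p / p" using p by simp
      have "ennreal (l powr p / p) * ennreal a' = ennreal (l powr p / p * a')"
        using lpp a' by (subst ennreal_mult[symmetric]) auto
      moreover have "ennreal c * 2 = ennreal (c * 2)" using c0 by (simp add: ennreal_mult)
      moreover have "0 \<le> l powr p * a' / p" using p a' by simp
      ultimately show ?thesis using c0 by (simp add: ennreal_plus[symmetric] del: ennreal_plus)
    qed
    also have "l powr p / p * a' + c * 2 = a' powr (1/p) * (1/p + 2/q)"
    proof -
      have "l powr p * a' = a' powr (1/p)"
      proof -
        have "1/p = 1 + (- 1/q)" using pq by simp
        hence "a' powr (1/p) = a' powr (1 + (- 1/q))" by simp
        also have "\<dots> = a' powr 1 * a' powr (- 1/q)" by (rule powr_add)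
        finally have "a' powr (1/p) = a' powr 1 * a' powr (- 1/q)" .
        thus ?thesis unfolding lp using a' by simp
      qed
      moreover have "c = a' powr (1/p) / q"
        unfolding c_def lq using a' by (simp add: powr_minus divide_simps)
      ultimately show ?thesis by (simp add: algebra_simps)
    qed
    also have "\<dots> \<le> 2 * a' powr (1/p)"
    proof -
      have "1/q < 1" using q1 by simp
      moreover have "1/p + 2/q = (1/p + 1/q) + 1/q" by simp
      ultimately have "1/p + 2/q \<le> 2" using pq by linarith
      thus ?thesis using a' by (simp add: mult.commute)
    qed
    finally show ?thesis by (simp add: ennreal_leI)
  qed
  show ?thesis
  proof (cases "a = 0")
    case False
    thus ?thesis using main[of a] a0 by simp
  next
    case True
    have "?E \<le> ennreal 2" using main[of 1] True by simp
    then obtain e where e: "?E = ennreal e" "0 \<le> e"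
      by (metis ennreal_cases ennreal_le_iff2 ennreal_neq_top le_ennreal_iff top.extremum_uniqueI zero_le_numeral)
    have "e \<le> 0"
    proof (rule ccontr)
      assume "\<not> e \<le> 0"
      hence e0: "0 < e" by simp
      have "ennreal e \<le> ennreal (2 * ((e/4) powr p) powr (1/p))"
        using main[of "(e/4) powr p"] e0 True e by simp
      also have "((e/4) powr p) powr (1/p) = e/4" using p e0 by (simp add: powr_powr)
      finally have "e \<le> e/2" using e0 by (simp add: ennreal_le_iff)
      thus False using e0 by simp
    qed
    thus ?thesis using e True by simp
  qed
qed




definition Pn :: "real \<Rightarrow> real \<Rightarrow> real^'d \<Rightarrow> ennreal" where
  "Pn K s z = (\<integral>\<^sup>+ w. ennreal (heat_kernel s z w) * indicator {w. norm w \<le> K} w \<partial>lborel)"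

definition PF :: "(real^'d \<Rightarrow> real) \<Rightarrow> real \<Rightarrow> real^'d \<Rightarrow> ennreal" where
  "PF \<phi> r z = (\<integral>\<^sup>+ w. ennreal (heat_kernel r z w * \<phi> w) \<partial>lborel)"

lemma Pn_meas[measurable (raw)]:
  assumes [measurable]: "f \<in> borel_measurable N" "g \<in> borel_measurable N"
  shows "(\<lambda>x. Pn K (f x) (g x :: real^'d)) \<in> borel_measurable N"
proof -
  have "(\<lambda>x. \<integral>\<^sup>+ w. ennreal (heat_kernel (f x) (g x) w) * indicator {w. norm w \<le> K} w \<partial>lborel) \<in> borel_measurable N"
    by measurable
  thus ?thesis unfolding Pn_def .
qed

lemma PF_meas[measurable (raw)]:
  assumes [measurable]: "f \<in> borel_measurable N" "g \<in> borel_measurable N" "\<phi> \<in> borel_measurable borel"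
  shows "(\<lambda>x. PF \<phi> (f x) (g x :: real^'d)) \<in> borel_measurable N"
proof -
  have "(\<lambda>x. \<integral>\<^sup>+ w. ennreal (heat_kernel (f x) (g x) w * \<phi> w) \<partial>lborel) \<in> borel_measurable N"
    by measurable
  thus ?thesis unfolding PF_def .
qed

lemma hk_translate:
  assumes [measurable]: "F \<in> borel_measurable borel"
  shows "(\<integral>\<^sup>+ w. ennreal (heat_kernel s z w) * F w \<partial>lborel) = (\<integral>\<^sup>+ a. ennreal (heat_kernel s 0 a) * F (z + a) \<partial>lborel)"
  by (subst lborel_translate[where c=z]) (auto simp: hk_shift[of s z])

context bmpair begin

lemma hk_int1:
  assumes s: "0 < s"
  shows "(\<integral>\<^sup>+ a. ennreal (heat_kernel s 0 (a::real^'d)) \<partial>lborel) = 1"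
proof -
  interpret prob_space M by (rule prob)
  show ?thesis
    using distributed_emeasure[OF distW(1)[OF s], of UNIV] by (simp add: emeasure_space_1)
qed

lemma hk_int1':
  assumes s: "0 < s"
  shows "(\<integral>\<^sup>+ w. ennreal (heat_kernel s z (w::real^'d)) \<partial>lborel) = 1"
  using hk_translate[of "\<lambda>_. 1" s z] hk_int1[OF s] by simp

lemma E_V:
  fixes b :: bool
  assumes s: "0 < s" and [measurable]: "F \<in> borel_measurable borel"
  defines "V \<equiv> (if b then W else W')"
  shows "(\<integral>\<^sup>+\<omega>. F (z + (V s \<omega> - V 0 \<omega>)) \<partial>M) = (\<integral>\<^sup>+ w. ennreal (heat_kernel s z w) * F w \<partial>lborel)"
proof -
  have d: "distributed M lborel (\<lambda>\<omega>. V s \<omega> - V 0 \<omega>) (\<lambda>z. ennreal (heat_kernel s 0 z))"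
    using distW[OF s] by (cases b) (simp_all add: V_def)
  have "(\<integral>\<^sup>+\<omega>. F (z + (V s \<omega> - V 0 \<omega>)) \<partial>M) = (\<integral>\<^sup>+ a. ennreal (heat_kernel s 0 a) * F (z + a) \<partial>lborel)"
    by (subst distributed_nn_integral[OF d, symmetric]) auto
  also have "\<dots> = (\<integral>\<^sup>+ w. ennreal (heat_kernel s z w) * F w \<partial>lborel)"
    by (rule hk_translate[symmetric]) simp
  finally show ?thesis .
qed

lemma PROD:
  assumes s: "0 < s" and [measurable]: "F1 \<in> borel_measurable borel" "F2 \<in> borel_measurable borel"
  shows "(\<integral>\<^sup>+\<omega>. F1 (x + (W s \<omega> - W 0 \<omega>)) * F2 (y + (W' s \<omega> - W' 0 \<omega>)) \<partial>M)
     = (\<integral>\<^sup>+ w. ennreal (heat_kernel s x w) * F1 w \<partial>lborel) * (\<integral>\<^sup>+ w. ennreal (heat_kernel s y w) * F2 w \<partial>lborel)"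
proof -
  have "(\<integral>\<^sup>+\<omega>. F1 (x + (W s \<omega> - W 0 \<omega>)) * F2 (y + (W' s \<omega> - W' 0 \<omega>)) \<partial>M)
      = (\<integral>\<^sup>+ ac. (case ac of (a, c) \<Rightarrow> ennreal (heat_kernel s 0 a) * ennreal (heat_kernel s 0 c)) * (case ac of (a, c) \<Rightarrow> F1 (x + a) * F2 (y + c)) \<partial>(lborel \<Otimes>\<^sub>M lborel))"
    by (subst distributed_nn_integral[OF jointWW'[OF s]]) auto
  also have "\<dots> = (\<integral>\<^sup>+ a. \<integral>\<^sup>+ c. (ennreal (heat_kernel s 0 a) * F1 (x + a)) * (ennreal (heat_kernel s 0 c) * F2 (y + c)) \<partial>lborel \<partial>lborel)"
    by (subst lborel.nn_integral_fst[symmetric]) (auto simp: ac_simps)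
  also have "\<dots> = (\<integral>\<^sup>+ a. ennreal (heat_kernel s 0 a) * F1 (x + a) \<partial>lborel) * (\<integral>\<^sup>+ c. ennreal (heat_kernel s 0 c) * F2 (y + c) \<partial>lborel)"
    by (simp add: nn_integral_cmult nn_integral_multc)
  also have "\<dots> = (\<integral>\<^sup>+ w. ennreal (heat_kernel s x w) * F1 w \<partial>lborel) * (\<integral>\<^sup>+ w. ennreal (heat_kernel s y w) * F2 w \<partial>lborel)"
    using hk_translate[of F1 s x] hk_translate[of F2 s y] by simp
  finally show ?thesis .
qed

lemma CK:
  fixes b :: bool
  assumes s: "0 < s" and r: "0 < r"
  defines "V \<equiv> (if b then W else W')"
  shows "(\<integral>\<^sup>+\<omega>. Pn K r (z + (V s \<omega> - V 0 \<omega>)) \<partial>M) = Pn K (s + r) z"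
proof -
  let ?ind = "indicator {w::real^'d. norm w \<le> K} :: real^'d \<Rightarrow> ennreal"
  have [measurable]: "V t \<in> borel_measurable M" for t by (cases b) (simp_all add: V_def)
  have "(\<integral>\<^sup>+\<omega>. ?ind (z + ((V s \<omega> - V 0 \<omega>) + (V (s + r) \<omega> - V s \<omega>))) \<partial>M)
      = (\<integral>\<^sup>+ ac. (case ac of (a, c) \<Rightarrow> ennreal (heat_kernel s 0 a) * ennreal (heat_kernel r 0 c)) * (case ac of (a, c) \<Rightarrow> ?ind (z + (a + c))) \<partial>(lborel \<Otimes>\<^sub>M lborel))"
    by (subst distributed_nn_integral[OF jointCK[OF s r, of b, folded V_def]]) auto
  also have "\<dots> = (\<integral>\<^sup>+ a. \<integral>\<^sup>+ c. ennreal (heat_kernel s 0 a) * (ennreal (heat_kernel r 0 c) * ?ind (z + a + c)) \<partial>lborel \<partial>lborel)"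
    by (subst lborel.nn_integral_fst[symmetric]) (auto simp: ac_simps)
  also have "\<dots> = (\<integral>\<^sup>+ a. ennreal (heat_kernel s 0 a) * Pn K r (z + a) \<partial>lborel)"
  proof (intro nn_integral_cong)
    fix a :: "real^'d"
    have "Pn K r (z + a) = (\<integral>\<^sup>+ c. ennreal (heat_kernel r 0 c) * ?ind (z + a + c) \<partial>lborel)"
      unfolding Pn_def by (rule hk_translate) simp
    thus "(\<integral>\<^sup>+ c. ennreal (heat_kernel s 0 a) * (ennreal (heat_kernel r 0 c) * ?ind (z + a + c)) \<partial>lborel) = ennreal (heat_kernel s 0 a) * Pn K r (z + a)"
      by (simp add: nn_integral_cmult)
  qed
  also have "\<dots> = (\<integral>\<^sup>+\<omega>. Pn K r (z + (V s \<omega> - V 0 \<omega>)) \<partial>M)"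
    using E_V[OF s, where F="Pn K r" and b=b and z=z] hk_translate[of "Pn K r" s z] unfolding V_def[symmetric] by simp
  finally have 1: "(\<integral>\<^sup>+\<omega>. Pn K r (z + (V s \<omega> - V 0 \<omega>)) \<partial>M) = (\<integral>\<^sup>+\<omega>. ?ind (z + ((V s \<omega> - V 0 \<omega>) + (V (s + r) \<omega> - V s \<omega>))) \<partial>M)" ..
  also have "\<dots> = (\<integral>\<^sup>+\<omega>. ?ind (z + (V (s + r) \<omega> - V 0 \<omega>)) \<partial>M)"
    by (intro nn_integral_cong) (simp add: algebra_simps)
  also have "\<dots> = Pn K (s + r) z"
    using E_V[where s="s + r" and F="?ind" and b=b and z=z] s r unfolding V_def[symmetric] by (simp add: Pn_def)
  finally show ?thesis .
qed

end





lemma Wm: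
  fixes W :: "real \<Rightarrow> 'a \<Rightarrow> 'b::{metric_space, second_countable_topology}"
  assumes meas: "\<And>t. W t \<in> borel_measurable M"
    and cont: "\<And>\<omega>. \<omega> \<in> space M \<Longrightarrow> continuous_on {0..} (\<lambda>s. W s \<omega>)"
    and f: "f \<in> borel_measurable N" and h: "h \<in> measurable N M"
  shows "(\<lambda>p. W (max 0 (f p)) (h p)) \<in> borel_measurable N"
proof -
  have "(\<lambda>p. (f p, h p)) \<in> measurable N ((lborel::real measure) \<Otimes>\<^sub>M M)"
    using f h by (intro measurable_Pair) auto
  from measurable_compose[OF this path_meas[OF meas cont]] show ?thesis by simp
qed

lemma g2_meas:
  fixes g :: "'b::second_countable_topology \<Rightarrow> 'c::second_countable_topology \<Rightarrow> real"
  assumes g: "(\<lambda>(x, y). g x y) \<in> borel_measurable borel"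
    and [measurable]: "f1 \<in> borel_measurable N" "f2 \<in> borel_measurable N"
  shows "(\<lambda>p. g (f1 p) (f2 p) :: real) \<in> borel_measurable N"
proof -
  have "(\<lambda>p. (f1 p, f2 p)) \<in> measurable N (borel \<Otimes>\<^sub>M borel)"
    by measurable
  hence "(\<lambda>p. (f1 p, f2 p)) \<in> measurable N borel" by (simp add: borel_prod)
  from measurable_compose[OF this g] show ?thesis by simp
qed

lemma Pn_le1:
  assumes "\<And>s. 0 < s \<Longrightarrow> (\<integral>\<^sup>+ w. ennreal (heat_kernel s z (w::real^'d)) \<partial>lborel) = 1" and "0 \<le> s"
  shows "Pn K s z \<le> 1"
proof (cases "s = 0")
  case True thus ?thesis by (simp add: Pn_def hk_zero)
next
  case False
  hence "0 < s" using assms(2) by simp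
  have "Pn K s z \<le> (\<integral>\<^sup>+ w. ennreal (heat_kernel s z (w::real^'d)) \<partial>lborel)"
    unfolding Pn_def by (intro nn_integral_mono) (auto simp: indicator_def)
  thus ?thesis using assms(1)[OF \<open>0 < s\<close>] by simp
qed

lemma PF_le:
  assumes phi: "\<And>w. \<phi> w \<le> \<Phi> * indicator {w. norm w \<le> K} w" and "\<Phi> \<ge> 0" and [measurable]: "\<phi> \<in> borel_measurable borel"
  shows "PF \<phi> r z \<le> ennreal \<Phi> * Pn K r (z::real^'d)"
proof -
  have "PF \<phi> r z \<le> (\<integral>\<^sup>+ w. ennreal \<Phi> * (ennreal (heat_kernel r z w) * indicator {w. norm w \<le> K} w) \<partial>lborel)"
    unfolding PF_def
  proof (intro nn_integral_mono)
    fix w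
    have "heat_kernel r z w * \<phi> w \<le> heat_kernel r z w * (\<Phi> * indicator {w. norm w \<le> K} w)"
      using phi hk_nonneg by (intro mult_left_mono) auto
    hence "ennreal (heat_kernel r z w * \<phi> w) \<le> ennreal (\<Phi> * (heat_kernel r z w * indicator {w. norm w \<le> K} w))"
      by (intro ennreal_leI) (simp add: ac_simps)
    also have "\<dots> = ennreal \<Phi> * (ennreal (heat_kernel r z w) * indicator {w. norm w \<le> K} w)"
      using \<open>\<Phi> \<ge> 0\<close> by (simp add: ennreal_mult[OF \<open>\<Phi> \<ge> 0\<close> hk_nonneg] indicator_def)
    finally show "ennreal (heat_kernel r z w * \<phi> w) \<le> ennreal \<Phi> * (ennreal (heat_kernel r z w) * indicator {w. norm w \<le> K} w)" .
  qed
  also have "\<dots> = ennreal \<Phi> * Pn K r z"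
    unfolding Pn_def by (subst nn_integral_cmult) auto
  finally show ?thesis .
qed

lemma ennreal_mult_le: "0 \<le> a \<Longrightarrow> ennreal (a * b) \<le> ennreal a * ennreal b"
proof (cases "b \<ge> 0")
  case False
  assume a: "0 \<le> a"
  hence "a * b \<le> 0" using False by (simp add: mult_nonneg_nonpos)
  hence "ennreal (a * b) = 0" by (simp add: ennreal_eq_0_iff)
  thus ?thesis by simp
qed (auto simp: ennreal_mult)

lemma ennreal_plus_le: "ennreal (a + b) \<le> ennreal a + ennreal b"
proof (cases "a \<ge> 0 \<and> b \<ge> 0")
  case True thus ?thesis by (simp add: ennreal_plus)
next
  case False
  thus ?thesis
  proof (cases "a \<ge> 0")
    case True
    hence "b < 0" using False by simp
    hence "ennreal (a + b) \<le> ennreal a" by (intro ennreal_leI) simp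
    thus ?thesis by (simp add: add_increasing2)
  next
    case False
    hence "ennreal (a + b) \<le> ennreal b" by (intro ennreal_leI) simp
    thus ?thesis by (simp add: add_increasing)
  qed
qed

lemma Qop_le:
  "ennreal (Qop T \<phi> z) \<le> (\<integral>\<^sup>+ r. indicator {0<..T} r * PF \<phi> r (z::real^'d) \<partial>lborel)"
proof -
  have "ennreal (Qop T \<phi> z) \<le> (\<integral>\<^sup>+ r. indicator {0..T} r * ennreal (LINT y|lborel. heat_kernel r z y * \<phi> y) \<partial>lborel)"
    unfolding Qop_def by (rule ennreal_set_integral_le)
  also have "\<dots> \<le> (\<integral>\<^sup>+ r. indicator {0..T} r * PF \<phi> r z \<partial>lborel)"
    unfolding PF_def by (intro nn_integral_mono mult_left_mono ennreal_integral_le) auto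
  also have "\<dots> = (\<integral>\<^sup>+ r. indicator {0<..T} r * PF \<phi> r z \<partial>lborel)"
  proof (intro nn_integral_cong_AE)
    show "AE r in lborel. indicator {0..T} r * PF \<phi> r z = indicator {0<..T} r * PF \<phi> r z"
      using AE_lborel_singleton[of "0::real"] by eventually_elim (auto simp: indicator_def)
  qed
  finally show ?thesis .
qed




lemma nn_eq_int:
  fixes f :: "'a \<Rightarrow> real"
  assumes fm: "f \<in> borel_measurable N" and f0: "\<And>x. 0 \<le> f x" and fin: "(\<integral>\<^sup>+ x. ennreal (f x) \<partial>N) < \<infinity>"
  shows "(\<integral>\<^sup>+ x. ennreal (f x) \<partial>N) = ennreal (integral\<^sup>L N f)" "integral\<^sup>L N f = enn2real (\<integral>\<^sup>+ x. ennreal (f x) \<partial>N)"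
    "0 \<le> integral\<^sup>L N f"
proof -
  have e: "(\<lambda>x. ennreal (norm (f x))) = (\<lambda>x. ennreal (f x))" using f0 by (intro ext) (simp add: abs_of_nonneg)
  have i: "integrable N f"
    using integrableI_bounded[OF fm] fin unfolding e by simp
  show 1: "(\<integral>\<^sup>+ x. ennreal (f x) \<partial>N) = ennreal (integral\<^sup>L N f)"
    by (rule nn_integral_eq_integral[OF i]) (simp add: f0)
  show 3: "0 \<le> integral\<^sup>L N f" using f0 by (intro Bochner_Integration.integral_nonneg) auto
  show "integral\<^sup>L N f = enn2real (\<integral>\<^sup>+ x. ennreal (f x) \<partial>N)"
    unfolding 1 using 3 by simp
qed

lemma Qtilde_eq:
  assumes hk1: "\<And>s. 0 < s \<Longrightarrow> (\<integral>\<^sup>+ w. ennreal (heat_kernel s x (w::real^'d)) \<partial>lborel) = 1"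
    and t: "0 \<le> t" and p: "0 < p"
  shows "ennreal (Qtilde K p t x) = (\<integral>\<^sup>+ s. indicator {0..t} s * ennreal (enn2real (Pn K s x) powr (1/p)) \<partial>lborel)"
    "0 \<le> Qtilde K p t x"
proof -
  let ?S = "{z::real^'d. norm z \<le> K}"
  have inner: "(LINT z:?S|lborel. heat_kernel s x z) = enn2real (Pn K s x)" if s: "0 \<le> s" for s
  proof -
    have e: "Pn K s x = (\<integral>\<^sup>+ z. ennreal (indicator ?S z *\<^sub>R heat_kernel s x z) \<partial>lborel)"
      unfolding Pn_def by (intro nn_integral_cong) (auto simp: indicator_def)
    have "Pn K s x < \<infinity>" using Pn_le1[OF hk1 s, of K] by (simp add: le_less_trans)
    hence fin: "(\<integral>\<^sup>+ z. ennreal (indicator ?S z *\<^sub>R heat_kernel s x z) \<partial>lborel) < \<infinity>" using e by simp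
    have "(LINT z:?S|lborel. heat_kernel s x z) = integral\<^sup>L lborel (\<lambda>z. indicator ?S z *\<^sub>R heat_kernel s x z)"
      by (simp add: set_lebesgue_integral_def)
    also have "\<dots> = enn2real (Pn K s x)"
      unfolding e by (rule nn_eq_int(2)[OF _ _ fin]) (auto simp: hk_nonneg)
    finally show ?thesis .
  qed
  let ?f = "\<lambda>s. indicator {0..t} s *\<^sub>R (enn2real (Pn K s x) powr (1/p))"
  have q: "Qtilde K p t x = integral\<^sup>L lborel ?f"
    unfolding Qtilde_def set_lebesgue_integral_def[of _ "{0..t}"]
  proof (intro Bochner_Integration.integral_cong refl)
    fix s
    show "indicator {0..t} s *\<^sub>R (LINT z:?S|lborel. heat_kernel s x z) powr (1/p) = ?f s"
    proof (cases "s \<in> {0..t}")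
      case True
      hence "0 \<le> s" by simp
      from inner[OF this] True show ?thesis by simp
    qed simp
  qed
  have bnd: "enn2real (Pn K s x) powr (1/p) \<le> 1" if "0 \<le> s" for s
  proof -
    have "enn2real (Pn K s x) \<le> 1" using Pn_le1[OF hk1 that, of K]
      using enn2real_mono[of "Pn K s x" 1] by simp
    thus ?thesis using p by (intro powr_le1) auto
  qed
  have fin: "(\<integral>\<^sup>+ s. ennreal (?f s) \<partial>lborel) < \<infinity>"
  proof -
    have "(\<integral>\<^sup>+ s. ennreal (?f s) \<partial>lborel) \<le> (\<integral>\<^sup>+ s. indicator {0..t} s \<partial>lborel)"
      using bnd by (intro nn_integral_mono) (auto simp: indicator_def)
    also have "\<dots> = ennreal t" using t by simp
    finally show ?thesis by (simp add: le_less_trans)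
  qed
  have "ennreal (Qtilde K p t x) = (\<integral>\<^sup>+ s. ennreal (?f s) \<partial>lborel)"
    unfolding q by (rule nn_eq_int(1)[OF _ _ fin, symmetric]) auto
  also have "\<dots> = (\<integral>\<^sup>+ s. indicator {0..t} s * ennreal (enn2real (Pn K s x) powr (1/p)) \<partial>lborel)"
    by (intro nn_integral_cong) (auto simp: indicator_def)
  finally show "ennreal (Qtilde K p t x) = (\<integral>\<^sup>+ s. indicator {0..t} s * ennreal (enn2real (Pn K s x) powr (1/p)) \<partial>lborel)" .
  show "0 \<le> Qtilde K p t x" unfolding q by (rule nn_eq_int(3)[OF _ _ fin]) auto
qed


lemma powp_bound:
  fixes p P \<Phi> e v :: real
  assumes p: "1 < p" and P: "0 \<le> P" "P \<le> 1" and \<Phi>: "0 \<le> \<Phi>" and e: "0 \<le> e" "e \<le> \<Phi> * P"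
    and v: "0 \<le> v" "v \<le> \<Phi> * i" and i: "i = 0 \<or> i = 1"
  shows "(v * e) powr p \<le> \<Phi> powr (2 * p) * (i * P)"
proof -
  have "(v * e) powr p = v powr p * e powr p" using v e by (simp add: powr_mult)
  also have "\<dots> \<le> (\<Phi> powr p * i) * (\<Phi> powr p * P)"
  proof (intro mult_mono)
    show "v powr p \<le> \<Phi> powr p * i"
      using i
    proof
      assume "i = 0" thus ?thesis using v by simp
    next
      assume "i = 1" thus ?thesis using v p by (simp add: powr_mono2)
    qed
    have "e powr p \<le> (\<Phi> * P) powr p" using e p by (simp add: powr_mono2)
    also have "\<dots> = \<Phi> powr p * P powr p" using \<Phi> P by (simp add: powr_mult)
    also have "P powr p \<le> P"
    proof (cases "P = 0")
      case False thus ?thesis using P p powr_le_one_le[of P p] by simp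
    qed simp
    hence "\<Phi> powr p * P powr p \<le> \<Phi> powr p * P" by (intro mult_left_mono) auto
    finally show "e powr p \<le> \<Phi> powr p * P" .
  qed (use i in auto)
  also have "\<dots> = \<Phi> powr (2 * p) * (i * P)"
    using \<Phi> by (simp add: powr_add[symmetric] mult_2 algebra_simps)
  finally show ?thesis .
qed

context bmpair begin

lemma term_bound:
  fixes b :: bool and \<phi> :: "real^'d \<Rightarrow> real" and X :: "'a \<Rightarrow> ennreal" and x y :: "real^'d"
  assumes s: "0 < s" and r: "0 < r" and p: "1 < p" and q: "q = p / (p - 1)"
    and phi_le: "\<And>w. \<phi> w \<le> \<Phi> * indicator {w. norm w \<le> K} w" and phi0: "\<And>w. 0 \<le> \<phi> w"
    and \<Phi>: "0 < \<Phi>" and phim[measurable]: "\<phi> \<in> borel_measurable borel"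
    and Xm[measurable]: "X \<in> borel_measurable M"
    and hX: "(\<integral>\<^sup>+\<omega>. exp_enn (ennreal q * X \<omega>) \<partial>M) \<le> 2"
  defines "U \<equiv> if b then W else W'" and "U' \<equiv> if b then W' else W"
    and "x1 \<equiv> if b then x else y" and "y1 \<equiv> if b then y else x"
  shows "(\<integral>\<^sup>+\<omega>. ennreal (\<phi> (x1 + U s \<omega>)) * PF \<phi> r (y1 + U' s \<omega>) * exp_enn (X \<omega>) \<partial>M)
     \<le> ennreal (2 * \<Phi>\<^sup>2 * enn2real (Pn K s x1) powr (1/p) * enn2real (Pn K (s + r) y1) powr (1/p))"
proof -
  interpret prob_space M by (rule prob)
  have Um[measurable]: "U t \<in> borel_measurable M" "U' t \<in> borel_measurable M" for t
    by (cases b; simp add: U_def U'_def)+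
  have U0: "U 0 \<omega> = 0" "U' 0 \<omega> = 0" if "\<omega> \<in> space M" for \<omega>
    using W0[OF that] by (cases b; simp add: U_def U'_def)+
  have Pn1: "Pn K u z \<le> 1" if "0 \<le> u" for u and z :: "real^'d"
    by (rule Pn_le1) (auto intro: hk_int1' that)
  have Pnfin: "Pn K u z < \<infinity>" if "0 \<le> u" for u and z :: "real^'d"
    by (rule order.strict_trans1[OF Pn1[OF that] ennreal_one_less_top[unfolded infinity_ennreal_def[symmetric]]])
  have PFle: "PF \<phi> r z \<le> ennreal \<Phi> * Pn K r z" for z :: "real^'d"
    by (rule PF_le[OF phi_le less_imp_le[OF \<Phi>] phim])
  have PFfin: "PF \<phi> r z < \<infinity>" for z :: "real^'d"
  proof -
    have "ennreal \<Phi> * Pn K r z < \<infinity>" using Pnfin[of r z] r by (simp add: ennreal_mult_less_top)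
    thus ?thesis using PFle[of z] by (rule order.strict_trans1[rotated])
  qed
  define P1 where "P1 = enn2real (Pn K s x1)"
  define P2 where "P2 = enn2real (Pn K (s + r) y1)"
  define a where "a = \<Phi> powr (2 * p) * (P1 * P2)"
  have a0: "0 \<le> a" by (simp add: a_def P1_def P2_def)
  define A where "A \<omega> = \<phi> (x1 + U s \<omega>) * enn2real (PF \<phi> r (y1 + U' s \<omega>))" for \<omega>
  have Am[measurable]: "A \<in> borel_measurable M" unfolding A_def by measurable
  have A0: "0 \<le> A \<omega>" for \<omega> unfolding A_def using phi0 by simp
  have LHS: "(\<integral>\<^sup>+\<omega>. ennreal (\<phi> (x1 + U s \<omega>)) * PF \<phi> r (y1 + U' s \<omega>) * exp_enn (X \<omega>) \<partial>M)
      = (\<integral>\<^sup>+\<omega>. ennreal (A \<omega>) * exp_enn (X \<omega>) \<partial>M)"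
  proof (intro nn_integral_cong)
    fix \<omega>
    have "ennreal (A \<omega>) = ennreal (\<phi> (x1 + U s \<omega>)) * PF \<phi> r (y1 + U' s \<omega>)"
      unfolding A_def using phi0 PFfin by (simp add: ennreal_mult)
    thus "ennreal (\<phi> (x1 + U s \<omega>)) * PF \<phi> r (y1 + U' s \<omega>) * exp_enn (X \<omega>) = ennreal (A \<omega>) * exp_enn (X \<omega>)" by simp
  qed
  let ?ind = "indicator {w::real^'d. norm w \<le> K} :: real^'d \<Rightarrow> ennreal"
  have hA: "(\<integral>\<^sup>+\<omega>. ennreal (A \<omega> powr p) \<partial>M) \<le> ennreal a"
  proof -
    have "(\<integral>\<^sup>+\<omega>. ennreal (A \<omega> powr p) \<partial>M) \<le>
        (\<integral>\<^sup>+\<omega>. ennreal (\<Phi> powr (2 * p)) * (?ind (x1 + (U s \<omega> - U 0 \<omega>)) * Pn K r (y1 + (U' s \<omega> - U' 0 \<omega>))) \<partial>M)"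
    proof (intro nn_integral_mono)
      fix \<omega> assume \<omega>: "\<omega> \<in> space M"
      define i :: real where "i = indicator {w::real^'d. norm w \<le> K} (x1 + U s \<omega>)"
      define PP where "PP = enn2real (Pn K r (y1 + U' s \<omega>))"
      have PP: "0 \<le> PP" "PP \<le> 1" unfolding PP_def using Pn1[of r "y1 + U' s \<omega>"] r
        by (auto simp: enn2real_leI)
      have eP: "enn2real (PF \<phi> r (y1 + U' s \<omega>)) \<le> \<Phi> * PP"
      proof -
        have "enn2real (PF \<phi> r (y1 + U' s \<omega>)) \<le> enn2real (ennreal \<Phi> * Pn K r (y1 + U' s \<omega>))"
          using PFle Pnfin[of r] r \<Phi> by (intro enn2real_mono) (auto simp: ennreal_mult_less_top)
        thus ?thesis unfolding PP_def using \<Phi> by (simp add: enn2real_mult)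
      qed
      have "A \<omega> powr p \<le> \<Phi> powr (2 * p) * (i * PP)"
        unfolding A_def
        by (rule powp_bound[OF p PP _ _ eP]) (use \<Phi> phi0 phi_le i_def in \<open>auto simp: indicator_def\<close>)
      hence "ennreal (A \<omega> powr p) \<le> ennreal (\<Phi> powr (2 * p) * (i * PP))" by (rule ennreal_leI)
      also have "\<dots> = ennreal (\<Phi> powr (2 * p)) * (?ind (x1 + U s \<omega>) * Pn K r (y1 + U' s \<omega>))"
        unfolding i_def PP_def using Pnfin[of r] r
        by (simp add: ennreal_mult indicator_def)
      finally show "ennreal (A \<omega> powr p) \<le> ennreal (\<Phi> powr (2 * p)) * (?ind (x1 + (U s \<omega> - U 0 \<omega>)) * Pn K r (y1 + (U' s \<omega> - U' 0 \<omega>)))"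
        using U0[OF \<omega>] by simp
    qed
    also have "\<dots> = ennreal (\<Phi> powr (2 * p)) * (\<integral>\<^sup>+\<omega>. ?ind (x1 + (U s \<omega> - U 0 \<omega>)) * Pn K r (y1 + (U' s \<omega> - U' 0 \<omega>)) \<partial>M)"
      by (rule nn_integral_cmult) measurable
    also have "(\<integral>\<^sup>+\<omega>. ?ind (x1 + (U s \<omega> - U 0 \<omega>)) * Pn K r (y1 + (U' s \<omega> - U' 0 \<omega>)) \<partial>M)
        = Pn K s x1 * (\<integral>\<^sup>+ w. ennreal (heat_kernel s y1 w) * Pn K r w \<partial>lborel)"
    proof (cases b)
      case True
      thus ?thesis using PROD[OF s, of ?ind "Pn K r" x1 y1]
        by (simp add: U_def U'_def Pn_def)
    next
      case False
      thus ?thesis using PROD[OF s, of "Pn K r" ?ind y1 x1]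
        by (simp add: U_def U'_def Pn_def mult.commute)
    qed
    also have "(\<integral>\<^sup>+ w. ennreal (heat_kernel s y1 w) * Pn K r w \<partial>lborel) = Pn K (s + r) y1"
      using E_V[OF s, where F="Pn K r" and b="\<not> b" and z=y1] CK[OF s r, where b="\<not> b" and z=y1 and K=K]
      by (cases b) (simp_all add: U'_def)
    also have "ennreal (\<Phi> powr (2 * p)) * (Pn K s x1 * Pn K (s + r) y1) = ennreal a"
      unfolding a_def P1_def P2_def using Pnfin[of s] Pnfin[of "s + r"] s r
      by (simp add: ennreal_mult ennreal_enn2real)
    finally show ?thesis .
  qed
  have "(\<integral>\<^sup>+\<omega>. ennreal (A \<omega>) * exp_enn (X \<omega>) \<partial>M) \<le> ennreal (2 * a powr (1/p))"
    by (rule young_E[OF p q Am A0 Xm hX hA a0])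
  also have "2 * a powr (1/p) = 2 * \<Phi>\<^sup>2 * P1 powr (1/p) * P2 powr (1/p)"
  proof -
    have "a powr (1/p) = (\<Phi> powr (2 * p)) powr (1/p) * (P1 powr (1/p) * P2 powr (1/p))"
      unfolding a_def by (simp add: powr_mult P1_def P2_def)
    also have "(\<Phi> powr (2 * p)) powr (1/p) = \<Phi>\<^sup>2"
    proof -
      have "(\<Phi> powr (2 * p)) powr (1/p) = \<Phi> powr 2" using p by (simp add: powr_powr)
      also have "\<dots> = \<Phi>\<^sup>2" using \<Phi> by simp
      finally show ?thesis .
    qed
    finally show ?thesis by simp
  qed
  finally show ?thesis unfolding LHS P1_def P2_def .
qed

end





lemma double_bound:
  fixes f1 f2 :: "real \<Rightarrow> real" and c t :: real
  assumes [measurable]: "f1 \<in> borel_measurable borel" "f2 \<in> borel_measurable borel"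
    and f10: "\<And>s. 0 \<le> f1 s" and f20: "\<And>s. 0 \<le> f2 s" and c: "0 \<le> c"
  shows "(\<integral>\<^sup>+ s. \<integral>\<^sup>+ r. indicator {0<..t} s * indicator {0<..t - s} r * ennreal (c * f1 s * f2 (s + r)) \<partial>lborel \<partial>lborel)
    \<le> ennreal c * (\<integral>\<^sup>+ s. indicator {0..t} s * ennreal (f1 s) \<partial>lborel) * (\<integral>\<^sup>+ u. indicator {0..t} u * ennreal (f2 u) \<partial>lborel)"
proof -
  let ?I2 = "(\<integral>\<^sup>+ u. indicator {0..t} u * ennreal (f2 u) \<partial>lborel)"
  have inner: "(\<integral>\<^sup>+ r. indicator {0<..t} s * indicator {0<..t - s} r * ennreal (c * f1 s * f2 (s + r)) \<partial>lborel)
      \<le> indicator {0..t} s * (ennreal c * ennreal (f1 s)) * ?I2" for s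
  proof (cases "s \<in> {0<..t}")
    case False thus ?thesis by simp
  next
    case True
    have "(\<integral>\<^sup>+ r. indicator {0<..t} s * indicator {0<..t - s} r * ennreal (c * f1 s * f2 (s + r)) \<partial>lborel)
        = (\<integral>\<^sup>+ r. (ennreal c * ennreal (f1 s)) * (indicator {0<..t - s} r * ennreal (f2 (s + r))) \<partial>lborel)"
      using True c f10 f20 by (intro nn_integral_cong) (simp add: ennreal_mult indicator_def)
    also have "\<dots> = (ennreal c * ennreal (f1 s)) * (\<integral>\<^sup>+ r. indicator {0<..t - s} r * ennreal (f2 (s + r)) \<partial>lborel)"
      by (rule nn_integral_cmult) measurable
    also have "(\<integral>\<^sup>+ r. indicator {0<..t - s} r * ennreal (f2 (s + r)) \<partial>lborel)
        = (\<integral>\<^sup>+ u. indicator {0<..t - s} (u - s) * ennreal (f2 u) \<partial>lborel)"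
      by (subst lborel_translate[where c=s]) auto
    also have "\<dots> \<le> ?I2"
      using True by (intro nn_integral_mono) (auto simp: indicator_def)
    finally show ?thesis using True by (simp add: mult_left_mono)
  qed
  have "(\<integral>\<^sup>+ s. \<integral>\<^sup>+ r. indicator {0<..t} s * indicator {0<..t - s} r * ennreal (c * f1 s * f2 (s + r)) \<partial>lborel \<partial>lborel)
      \<le> (\<integral>\<^sup>+ s. ennreal c * (indicator {0..t} s * ennreal (f1 s)) * ?I2 \<partial>lborel)"
    using inner by (intro nn_integral_mono) (simp add: ac_simps)
  also have "\<dots> = ennreal c * (\<integral>\<^sup>+ s. indicator {0..t} s * ennreal (f1 s) \<partial>lborel) * ?I2"
    by (simp add: nn_integral_cmult nn_integral_multc)
  finally show ?thesis .
qed


lemma pred_Ioc_var[measurable (raw)]: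
  fixes f h :: "'b \<Rightarrow> real"
  assumes [measurable]: "f \<in> borel_measurable N" "h \<in> borel_measurable N"
  shows "Measurable.pred N (\<lambda>x. h x \<in> {0<..t - f x})"
  unfolding greaterThanAtMost_iff by measurable

lemma exp_enn_ge:
  assumes "ennreal G \<le> X"
  shows "ennreal (exp G) \<le> exp_enn X"
proof (cases "X = \<top>")
  case True thus ?thesis by (simp add: exp_enn_def)
next
  case False
  then obtain v where v: "X = ennreal v" "0 \<le> v" by (cases X) auto
  have "G \<le> v"
  proof (cases "0 \<le> G")
    case True thus ?thesis using assms v by (simp add: ennreal_le_iff)
  qed (use v in simp)
  thus ?thesis using v by (simp add: exp_enn_def)
qed

theorem lemma4p1:
  fixes M :: "'a measure"
    and W W' :: "real \<Rightarrow> 'a \<Rightarrow> real^'d"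
    and g :: "real^'d \<Rightarrow> real^'d \<Rightarrow> real"
    and \<phi> :: "real^'d \<Rightarrow> real"
    and \<alpha> p \<epsilon> K :: real
  assumes BM: "indep_std_BM_pair M W W'"
    and dim: "CARD('d) \<ge> 3"
    and alpha: "\<alpha> > 2"
    and p: "1 < p" "p < 10 / 9"
    and g_meas: "(\<lambda>(x, y). g x y) \<in> borel_measurable borel"
    and g_nonneg: "\<And>x y. 0 \<le> g x y"
    and eps: "\<epsilon> > 0"
    and g_bound: "\<And>x y. g x y \<le> \<epsilon> * (if x = y then 1 else min (norm (x - y) powr (- \<alpha>)) 1)"
    and small: "\<And>x y. (\<integral>\<^sup>+ \<omega>. exp_enn (ennreal (p / (p - 1)) *
                   (\<integral>\<^sup>+ s\<in>{0..}. ennreal (g (x + W s \<omega>) (y + W' s \<omega>)) \<partial>lborel)) \<partial>M) \<le> 2"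
    and phi_cont: "continuous_on UNIV \<phi>"
    and phi_nonneg: "\<And>x. 0 \<le> \<phi> x"
    and phi_supp: "\<And>x. K < norm x \<Longrightarrow> \<phi> x = 0"
    and K: "K > 2"
  shows "\<exists>C. \<forall>t \<ge> 0. \<forall>x y.
           Vphi M W W' g \<phi> t x y \<le> ennreal (C * Qtilde K p t x * Qtilde K p t y)"
proof -
  interpret bmpair M W W' using BM by unfold_locales
  interpret prob_space M by (rule prob)
  define q where "q = p / (p - 1)"
  have phim[measurable]: "\<phi> \<in> borel_measurable borel"
    by (rule borel_measurable_continuous_onI[OF phi_cont])
  obtain \<Phi> where \<Phi>: "0 < \<Phi>" and phi_le: "\<And>w. \<phi> w \<le> \<Phi> * indicator {w. norm w \<le> K} w"
  proof -
    have "compact (\<phi> ` cball 0 K)"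
      by (rule compact_continuous_image[OF continuous_on_subset[OF phi_cont]]) auto
    then obtain B where B: "\<And>v. v \<in> \<phi> ` cball 0 K \<Longrightarrow> norm v \<le> B"
      using compact_imp_bounded bounded_iff by metis
    show ?thesis
    proof (rule that[of "max 1 B"])
      fix w :: "real^'d"
      show "\<phi> w \<le> max 1 B * indicator {w. norm w \<le> K} w"
      proof (cases "norm w \<le> K")
        case True
        hence "norm (\<phi> w) \<le> B" using B[of "\<phi> w"] by auto
        thus ?thesis using True by (simp add: indicator_def)
      next
        case False thus ?thesis using phi_supp[of w] by (simp add: indicator_def)
      qed
    qed simp
  qed
  have WbM[measurable (raw)]: "(\<lambda>p. W (max 0 (f p)) (h p)) \<in> borel_measurable N"
    "(\<lambda>p. W' (max 0 (f p)) (h p)) \<in> borel_measurable N"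
    if "f \<in> borel_measurable N" "h \<in> measurable N M" for f h and N :: "'b measure"
    using Wm[OF measW(1) contW(1) that] Wm[OF measW(2) contW(2) that] by auto
  have gM[measurable (raw)]: "(\<lambda>p. g (f1 p) (f2 p)) \<in> borel_measurable N"
    if "f1 \<in> borel_measurable N" "f2 \<in> borel_measurable N" for f1 f2 and N :: "'b measure"
    by (rule g2_meas[OF g_meas that])
  show ?thesis
  proof (intro exI[of _ "4 * \<Phi>\<^sup>2"] allI impI)
    fix t :: real and x y :: "real^'d" assume t: "0 \<le> t"
    define Xo where "Xo \<omega> = (\<integral>\<^sup>+ s\<in>{0..}. ennreal (g (x + W s \<omega>) (y + W' s \<omega>)) \<partial>lborel)" for \<omega>
    have Xo_alt: "Xo = (\<lambda>\<omega>. \<integral>\<^sup>+ s. ennreal (g (x + W (max 0 s) \<omega>) (y + W' (max 0 s) \<omega>)) * indicator {0..} s \<partial>lborel)"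
      unfolding Xo_def by (intro ext nn_integral_cong) (simp add: indicator_def)
    have Xom[measurable]: "Xo \<in> borel_measurable M" unfolding Xo_alt by measurable
    have hX: "(\<integral>\<^sup>+\<omega>. exp_enn (ennreal q * Xo \<omega>) \<partial>M) \<le> 2"
      using small[of x y] unfolding Xo_def q_def .
    define H where "H \<omega> s r = indicator {0<..t} s * indicator {0<..t - s} r *
       ((ennreal (\<phi> (x + W (max 0 s) \<omega>)) * PF \<phi> r (y + W' (max 0 s) \<omega>)
        + ennreal (\<phi> (y + W' (max 0 s) \<omega>)) * PF \<phi> r (x + W (max 0 s) \<omega>)) * exp_enn (Xo \<omega>))" for \<omega> s r
    have step1: "Vphi M W W' g \<phi> t x y \<le> (\<integral>\<^sup>+\<omega>. \<integral>\<^sup>+ s. \<integral>\<^sup>+ r. H \<omega> s r \<partial>lborel \<partial>lborel \<partial>M)"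
      unfolding Vphi_def
    proof (intro nn_integral_mono)
      fix \<omega> assume \<omega>: "\<omega> \<in> space M"
      define F where "F s = (\<phi> (x + W s \<omega>) * Qop (t - s) \<phi> (y + W' s \<omega>)
            + \<phi> (y + W' s \<omega>) * Qop (t - s) \<phi> (x + W s \<omega>))
           * exp (LINT u:{0..s}|lborel. g (x + W u \<omega>) (y + W' u \<omega>))" for s
      have pw: "ennreal (F s) \<le> (\<integral>\<^sup>+ r. H \<omega> s r \<partial>lborel)" if s: "s \<in> {0<..t}" for s
      proof -
        have ms: "max 0 s = s" using s by simp
        let ?B = "x + W s \<omega>" and ?B' = "y + W' s \<omega>"
        let ?G = "LINT u:{0..s}|lborel. g (x + W u \<omega>) (y + W' u \<omega>)"
        let ?PI1 = "\<integral>\<^sup>+ r. indicator {0<..t - s} r * PF \<phi> r ?B' \<partial>lborel"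
        let ?PI2 = "\<integral>\<^sup>+ r. indicator {0<..t - s} r * PF \<phi> r ?B \<partial>lborel"
        have eG: "ennreal (exp ?G) \<le> exp_enn (Xo \<omega>)"
        proof (rule exp_enn_ge)
          have "ennreal ?G \<le> (\<integral>\<^sup>+ u. indicator {0..s} u * ennreal (g (x + W u \<omega>) (y + W' u \<omega>)) \<partial>lborel)"
            by (rule ennreal_set_integral_le)
          also have "\<dots> \<le> Xo \<omega>"
            unfolding Xo_def by (intro nn_integral_mono) (auto simp: indicator_def)
          finally show "ennreal ?G \<le> Xo \<omega>" .
        qed
        have "ennreal (F s) \<le> ennreal (exp ?G) * ennreal (\<phi> ?B * Qop (t - s) \<phi> ?B' + \<phi> ?B' * Qop (t - s) \<phi> ?B)"
          unfolding F_def by (subst mult.commute, rule ennreal_mult_le, simp)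
        also have "\<dots> \<le> exp_enn (Xo \<omega>) * (ennreal (\<phi> ?B) * ?PI1 + ennreal (\<phi> ?B') * ?PI2)"
        proof (intro mult_mono eG)
          have "ennreal (\<phi> ?B * Qop (t - s) \<phi> ?B' + \<phi> ?B' * Qop (t - s) \<phi> ?B)
              \<le> ennreal (\<phi> ?B * Qop (t - s) \<phi> ?B') + ennreal (\<phi> ?B' * Qop (t - s) \<phi> ?B)"
            by (rule ennreal_plus_le)
          also have "\<dots> \<le> ennreal (\<phi> ?B) * ennreal (Qop (t - s) \<phi> ?B') + ennreal (\<phi> ?B') * ennreal (Qop (t - s) \<phi> ?B)"
            by (intro add_mono ennreal_mult_le phi_nonneg)
          also have "\<dots> \<le> ennreal (\<phi> ?B) * ?PI1 + ennreal (\<phi> ?B') * ?PI2"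
            by (intro add_mono mult_left_mono Qop_le) auto
          finally show "ennreal (\<phi> ?B * Qop (t - s) \<phi> ?B' + \<phi> ?B' * Qop (t - s) \<phi> ?B) \<le> ennreal (\<phi> ?B) * ?PI1 + ennreal (\<phi> ?B') * ?PI2" .
        qed auto
        also have "\<dots> = (\<integral>\<^sup>+ r. (ennreal (\<phi> ?B) * exp_enn (Xo \<omega>)) * (indicator {0<..t - s} r * PF \<phi> r ?B')
             + (ennreal (\<phi> ?B') * exp_enn (Xo \<omega>)) * (indicator {0<..t - s} r * PF \<phi> r ?B) \<partial>lborel)"
          by (simp add: nn_integral_add nn_integral_cmult algebra_simps)
        also have "\<dots> = (\<integral>\<^sup>+ r. H \<omega> s r \<partial>lborel)"
          unfolding H_def ms using s by (intro nn_integral_cong) (simp add: algebra_simps)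
        finally show ?thesis .
      qed
      have "ennreal (LINT s:{0..t}|lborel. F s) \<le> (\<integral>\<^sup>+ s. indicator {0..t} s * ennreal (F s) \<partial>lborel)"
        by (rule ennreal_set_integral_le)
      also have "\<dots> = (\<integral>\<^sup>+ s. indicator {0<..t} s * ennreal (F s) \<partial>lborel)"
      proof (intro nn_integral_cong_AE)
        show "AE s in lborel. indicator {0..t} s * ennreal (F s) = indicator {0<..t} s * ennreal (F s)"
          using AE_lborel_singleton[of "0::real"] by eventually_elim (auto simp: indicator_def)
      qed
      also have "\<dots> \<le> (\<integral>\<^sup>+ s. \<integral>\<^sup>+ r. H \<omega> s r \<partial>lborel \<partial>lborel)"
      proof (intro nn_integral_mono)
        fix s
        show "indicator {0<..t} s * ennreal (F s) \<le> (\<integral>\<^sup>+ r. H \<omega> s r \<partial>lborel)"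
          using pw[of s] by (cases "s \<in> {0<..t}") auto
      qed
      finally show "ennreal (LINT s:{0..t}|lborel. F s) \<le> (\<integral>\<^sup>+ s. \<integral>\<^sup>+ r. H \<omega> s r \<partial>lborel \<partial>lborel)" .
    qed
    interpret P: pair_sigma_finite M "lborel :: real measure" by unfold_locales
    have Hm: "(\<lambda>(\<omega>, s). \<integral>\<^sup>+ r. H \<omega> s r \<partial>lborel) \<in> borel_measurable (M \<Otimes>\<^sub>M lborel)"
      unfolding H_def by measurable
    have Hm2: "(\<lambda>(\<omega>, r). H \<omega> s r) \<in> borel_measurable (M \<Otimes>\<^sub>M lborel)" for s
      unfolding H_def by measurable
    have step2: "(\<integral>\<^sup>+\<omega>. \<integral>\<^sup>+ s. \<integral>\<^sup>+ r. H \<omega> s r \<partial>lborel \<partial>lborel \<partial>M) = (\<integral>\<^sup>+ s. \<integral>\<^sup>+ r. \<integral>\<^sup>+\<omega>. H \<omega> s r \<partial>M \<partial>lborel \<partial>lborel)"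
    proof -
      have "(\<integral>\<^sup>+\<omega>. \<integral>\<^sup>+ s. \<integral>\<^sup>+ r. H \<omega> s r \<partial>lborel \<partial>lborel \<partial>M) = (\<integral>\<^sup>+ s. \<integral>\<^sup>+\<omega>. \<integral>\<^sup>+ r. H \<omega> s r \<partial>lborel \<partial>M \<partial>lborel)"
        using P.Fubini'[OF Hm] by simp
      also have "\<dots> = (\<integral>\<^sup>+ s. \<integral>\<^sup>+ r. \<integral>\<^sup>+\<omega>. H \<omega> s r \<partial>M \<partial>lborel \<partial>lborel)"
        using P.Fubini'[OF Hm2] by (intro nn_integral_cong) simp
      finally show ?thesis .
    qed
    define c where "c = 2 * \<Phi>\<^sup>2"
    define fx where "fx u = enn2real (Pn K u x) powr (1/p)" for u
    define fy where "fy u = enn2real (Pn K u y) powr (1/p)" for u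
    have fxm[measurable]: "fx \<in> borel_measurable borel" unfolding fx_def by measurable
    have fym[measurable]: "fy \<in> borel_measurable borel" unfolding fy_def by measurable
    define Bd where "Bd s r = indicator {0<..t} s * indicator {0<..t - s} r * ennreal (c * fx s * fy (s + r))
        + indicator {0<..t} s * indicator {0<..t - s} r * ennreal (c * fy s * fx (s + r))" for s r
    have step3: "(\<integral>\<^sup>+\<omega>. H \<omega> s r \<partial>M) \<le> Bd s r" for s r
    proof (cases "s \<in> {0<..t} \<and> r \<in> {0<..t - s}")
      case False
      hence "H \<omega> s r = 0" for \<omega> unfolding H_def by auto
      thus ?thesis by simp
    next
      case True
      hence s: "0 < s" and r: "0 < r" and ms: "max 0 s = s" by auto
      have "(\<integral>\<^sup>+\<omega>. H \<omega> s r \<partial>M) = (\<integral>\<^sup>+\<omega>. ennreal (\<phi> (x + W s \<omega>)) * PF \<phi> r (y + W' s \<omega>) * exp_enn (Xo \<omega>)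
          + ennreal (\<phi> (y + W' s \<omega>)) * PF \<phi> r (x + W s \<omega>) * exp_enn (Xo \<omega>) \<partial>M)"
        unfolding H_def ms using True by (intro nn_integral_cong) (simp add: algebra_simps)
      also have "\<dots> = (\<integral>\<^sup>+\<omega>. ennreal (\<phi> (x + W s \<omega>)) * PF \<phi> r (y + W' s \<omega>) * exp_enn (Xo \<omega>) \<partial>M)
          + (\<integral>\<^sup>+\<omega>. ennreal (\<phi> (y + W' s \<omega>)) * PF \<phi> r (x + W s \<omega>) * exp_enn (Xo \<omega>) \<partial>M)"
        by (rule nn_integral_add) measurable
      also have "\<dots> \<le> ennreal (c * fx s * fy (s + r)) + ennreal (c * fy s * fx (s + r))"
      proof (rule add_mono)
        show "(\<integral>\<^sup>+\<omega>. ennreal (\<phi> (x + W s \<omega>)) * PF \<phi> r (y + W' s \<omega>) * exp_enn (Xo \<omega>) \<partial>M) \<le> ennreal (c * fx s * fy (s + r))"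
          using term_bound[OF s r p(1) q_def phi_le phi_nonneg \<Phi> phim Xom hX, where b=True and x=x and y=y]
          by (simp add: c_def fx_def fy_def)
        show "(\<integral>\<^sup>+\<omega>. ennreal (\<phi> (y + W' s \<omega>)) * PF \<phi> r (x + W s \<omega>) * exp_enn (Xo \<omega>) \<partial>M) \<le> ennreal (c * fy s * fx (s + r))"
          using term_bound[OF s r p(1) q_def phi_le phi_nonneg \<Phi> phim Xom hX, where b=False and x=x and y=y]
          by (simp add: c_def fx_def fy_def)
      qed
      also have "\<dots> = Bd s r" unfolding Bd_def using True by simp
      finally show ?thesis .
    qed
    have Qx: "ennreal (Qtilde K p t x) = (\<integral>\<^sup>+ s. indicator {0..t} s * ennreal (fx s) \<partial>lborel)" "0 \<le> Qtilde K p t x"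
      using Qtilde_eq[OF hk_int1' t, of p K] p unfolding fx_def by auto
    have Qy: "ennreal (Qtilde K p t y) = (\<integral>\<^sup>+ s. indicator {0..t} s * ennreal (fy s) \<partial>lborel)" "0 \<le> Qtilde K p t y"
      using Qtilde_eq[OF hk_int1' t, of p K] p unfolding fy_def by auto
    have c0: "0 \<le> c" unfolding c_def by simp
    have "(\<integral>\<^sup>+ s. \<integral>\<^sup>+ r. \<integral>\<^sup>+\<omega>. H \<omega> s r \<partial>M \<partial>lborel \<partial>lborel) \<le> (\<integral>\<^sup>+ s. \<integral>\<^sup>+ r. Bd s r \<partial>lborel \<partial>lborel)"
      by (intro nn_integral_mono step3)
    also have "\<dots> = (\<integral>\<^sup>+ s. \<integral>\<^sup>+ r. indicator {0<..t} s * indicator {0<..t - s} r * ennreal (c * fx s * fy (s + r)) \<partial>lborel \<partial>lborel)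
        + (\<integral>\<^sup>+ s. \<integral>\<^sup>+ r. indicator {0<..t} s * indicator {0<..t - s} r * ennreal (c * fy s * fx (s + r)) \<partial>lborel \<partial>lborel)"
      unfolding Bd_def by (subst nn_integral_add[symmetric]; (subst nn_integral_add)?; measurable?)
    also have "\<dots> \<le> ennreal c * ennreal (Qtilde K p t x) * ennreal (Qtilde K p t y) + ennreal c * ennreal (Qtilde K p t y) * ennreal (Qtilde K p t x)"
      unfolding Qx(1) Qy(1)
      by (intro add_mono double_bound fxm fym c0) (auto simp: fx_def fy_def)
    also have "\<dots> = ennreal (4 * \<Phi>\<^sup>2 * Qtilde K p t x * Qtilde K p t y)"
      using Qx(2) Qy(2) c0 unfolding c_def
      by (simp add: ennreal_mult[symmetric] ennreal_plus[symmetric] del: ennreal_plus)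
    finally have "(\<integral>\<^sup>+ s. \<integral>\<^sup>+ r. \<integral>\<^sup>+\<omega>. H \<omega> s r \<partial>M \<partial>lborel \<partial>lborel) \<le> ennreal (4 * \<Phi>\<^sup>2 * Qtilde K p t x * Qtilde K p t y)" .
    with step1 step2 show "Vphi M W W' g \<phi> t x y \<le> ennreal (4 * \<Phi>\<^sup>2 * Qtilde K p t x * Qtilde K p t y)"
      by simp
  qed
qed


end
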